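(* Consider a downlink system with $M\ge 1$ single-antenna access points (APs) $\mathscr{A}=\{1,\dots,M\}$ and $N\ge 1$ single-antenna devices $\mathscr{D}=\{1,\dots,N\}$. Every AP–device link $(i,j)$ has instantaneous received SNR $g_{ij}=\rho|h_{ij}|^2$, where the fades $h_{ij}\sim\mathcal{CN}(0,1)$ are i.i.d. (Rayleigh fading) and constant over one time cycle of duration $T$, and $\rho=P_t/(W\sigma_0)$ is the common average SNR, with $P_t$ the transmit power, $W$ the bandwidth and $\sigma_0$ the noise power spectral density. With the APs transmitting cooperatively, the achievable rate of device $j$ is $\mathcal{R}_j=W\log_2\!\big(1+\sum_{i\in\mathscr{A}}g_{ij}\big)$. The controller knows all $g_{ij}$ perfectly and, in each cycle, schedules exactly $K\in\{1,\dots,N\}$ devices (a set $\mathcal{S}$ with $|\mathcal{S}|=K$, which may depend on the channel realization), each receiving a packet of $B'=\frac{N}{K}B$ bits in TDMA fashion at rate $\mathcal{R}_j$; the transmission is in outage if $\sum_{j\in\mathcal{S}} B'/\mathcal{R}_j > T$. With $B,T,W,\sigma_0,N,M,K$ fixed (zero multiplexing gain), define the diversity order $d=-\lim_{P_t\to\infty}\frac{\log \mathbb{P}_{\mathrm{out}}}{\log P_t}$. Then the maximum diversity order achievable by such a scheduler (attained by scheduling the $K$ devices with the largest $\mathcal{R}_j$) is $N-K+1$ when $M=1$, and $M(N-K+1)$ for general $M$.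
   Context: $\mathbb{P}_{\mathrm{out}}$ denotes the probability (over the fading) that the scheduled transmission in a cycle is in outage. Logarithms of rates are base 2. *)

theory Defs
  imports "HOL-Probability.Probability"
begin

text \<open>Channel realizations: H (i,j) is the complex fade h_ij of the link from AP i
  (i in {1..M}) to device j (j in {1..N}).  The fades are i.i.d. CN(0,1), i.e. each has
  density exp(-|z|^2)/pi with respect to Lebesgue measure on the complex plane.\<close>

definition fade_measure :: "nat \<Rightarrow> nat \<Rightarrow> (nat \<times> nat \<Rightarrow> complex) measure" where
  "fade_measure M N =
     PiM ({1..M} \<times> {1..N}) (\<lambda>_. density lborel (\<lambda>z::complex. ennreal (exp (- (cmod z)\<^sup>2) / pi)))"

definition avg_snr :: "real \<Rightarrow> real \<Rightarrow> real \<Rightarrow> real" where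
  "avg_snr W \<sigma>0 Pt = Pt / (W * \<sigma>0)"

definition rate :: "real \<Rightarrow> real \<Rightarrow> nat \<Rightarrow> real \<Rightarrow> (nat \<times> nat \<Rightarrow> complex) \<Rightarrow> nat \<Rightarrow> real" where
  "rate W \<sigma>0 M Pt H j = W * log 2 (1 + (\<Sum>i\<in>{1..M}. avg_snr W \<sigma>0 Pt * (cmod (H (i, j)))\<^sup>2))"

definition in_outage :: "real \<Rightarrow> real \<Rightarrow> real \<Rightarrow> real \<Rightarrow> nat \<Rightarrow> nat \<Rightarrow> nat \<Rightarrow> real
    \<Rightarrow> nat set \<Rightarrow> (nat \<times> nat \<Rightarrow> complex) \<Rightarrow> bool" where
  "in_outage B T W \<sigma>0 M N K Pt S H \<longleftrightarrow>
     (\<Sum>j\<in>S. (real N / real K * B) / rate W \<sigma>0 M Pt H j) > T"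

type_synonym scheduler = "real \<Rightarrow> (nat \<times> nat \<Rightarrow> complex) \<Rightarrow> nat set"

definition valid_scheduler :: "nat \<Rightarrow> nat \<Rightarrow> scheduler \<Rightarrow> bool" where
  "valid_scheduler N K sched \<longleftrightarrow>
     (\<forall>Pt H. sched Pt H \<subseteq> {1..N} \<and> card (sched Pt H) = K)"

definition topK_scheduler :: "real \<Rightarrow> real \<Rightarrow> nat \<Rightarrow> nat \<Rightarrow> nat \<Rightarrow> scheduler \<Rightarrow> bool" where
  "topK_scheduler W \<sigma>0 M N K sched \<longleftrightarrow> valid_scheduler N K sched \<and>
     (\<forall>Pt H. \<forall>j\<in>sched Pt H. \<forall>j'\<in>{1..N} - sched Pt H.
        rate W \<sigma>0 M Pt H j' \<le> rate W \<sigma>0 M Pt H j)"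

definition measurable_outage :: "real \<Rightarrow> real \<Rightarrow> real \<Rightarrow> real \<Rightarrow> nat \<Rightarrow> nat \<Rightarrow> nat \<Rightarrow> scheduler \<Rightarrow> bool" where
  "measurable_outage B T W \<sigma>0 M N K sched \<longleftrightarrow>
     (\<forall>Pt>0. {H \<in> space (fade_measure M N). in_outage B T W \<sigma>0 M N K Pt (sched Pt H) H}
              \<in> sets (fade_measure M N))"

definition outage_prob :: "real \<Rightarrow> real \<Rightarrow> real \<Rightarrow> real \<Rightarrow> nat \<Rightarrow> nat \<Rightarrow> nat \<Rightarrow> scheduler \<Rightarrow> real \<Rightarrow> real" where
  "outage_prob B T W \<sigma>0 M N K sched Pt =
     measure (fade_measure M N)
       {H \<in> space (fade_measure M N). in_outage B T W \<sigma>0 M N K Pt (sched Pt H) H}"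

definition has_diversity_order :: "real \<Rightarrow> real \<Rightarrow> real \<Rightarrow> real \<Rightarrow> nat \<Rightarrow> nat \<Rightarrow> nat \<Rightarrow> scheduler \<Rightarrow> real \<Rightarrow> bool" where
  "has_diversity_order B T W \<sigma>0 M N K sched d \<longleftrightarrow>
     ((\<lambda>Pt. - (ln (outage_prob B T W \<sigma>0 M N K sched Pt) / ln Pt)) \<longlongrightarrow> d) at_top"

end

theory Submission
  imports Defs "HOL-Real_Asymp.Real_Asymp"
begin

definition fd :: "complex \<Rightarrow> real" where "fd z = exp (- (cmod z)\<^sup>2) / pi"
definition mu :: "complex measure" where "mu = density lborel (\<lambda>z. ennreal (fd z))"

lemma fd_meas[measurable]: "fd \<in> borel_measurable borel"
  unfolding fd_def by measurable

lemma sets_mu[simp]: "sets mu = sets borel" and space_mu[simp]: "space mu = UNIV"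
  by (simp_all add: mu_def)

lemma emeasure_lborel_ball_c: "r \<ge> 0 \<Longrightarrow> emeasure lborel (ball (0::complex) r) = ennreal (pi * r^2)"
  by (simp add: emeasure_ball unit_ball_vol_even[of 1, simplified])

lemma mu_ball_le: assumes "r \<ge> 0" shows "emeasure mu (ball 0 r) \<le> ennreal (r^2)"
proof -
  have "emeasure mu (ball 0 r) = (\<integral>\<^sup>+(x::complex). ennreal (fd x) * indicator (ball 0 r) x \<partial>lborel)"
    unfolding mu_def by (subst emeasure_density) auto
  also have "\<dots> \<le> (\<integral>\<^sup>+(x::complex). ennreal (1/pi) * indicator (ball 0 r) x \<partial>lborel)"
    by (intro nn_integral_mono) (auto simp: fd_def divide_right_mono intro!: ennreal_leI split: split_indicator)
  also have "\<dots> = ennreal (1/pi) * emeasure lborel (ball (0::complex) r)"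
    by (simp add: nn_integral_cmult_indicator)
  also have "\<dots> = ennreal (r^2)" using assms by (simp add: emeasure_lborel_ball_c ennreal_mult'[symmetric])
  finally show ?thesis .
qed

lemma exp_help: "cmod x < r \<Longrightarrow> exp (- (r^2)) / pi \<le> exp (- (cmod x)\<^sup>2) / pi"
  by (intro divide_right_mono) (auto intro!: power_mono)

lemma mu_ball_ge: assumes "r \<ge> 0" shows "ennreal (r^2 * exp (- (r^2))) \<le> emeasure mu (ball 0 r - {0})"
proof -
  have "ennreal (r^2 * exp (- (r^2))) = ennreal (exp (- (r^2)) / pi) * emeasure lborel (ball (0::complex) r)"
    using assms by (simp add: emeasure_lborel_ball_c ennreal_mult'[symmetric])
  also have "emeasure lborel (ball (0::complex) r) = emeasure lborel (ball (0::complex) r - {0})"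
    by (rule emeasure_Diff_null_set[symmetric]) auto
  also have "ennreal (exp (- (r^2)) / pi) * \<dots> = (\<integral>\<^sup>+(x::complex). ennreal (exp (- (r^2)) / pi) * indicator (ball 0 r - {0}) x \<partial>lborel)"
    by (simp add: nn_integral_cmult_indicator)
  also have "\<dots> \<le> (\<integral>\<^sup>+(x::complex). ennreal (fd x) * indicator (ball 0 r - {0}) x \<partial>lborel)"
    by (intro nn_integral_mono) (auto simp: fd_def exp_help intro!: ennreal_leI split: split_indicator)
  also have "\<dots> = emeasure mu (ball 0 r - {0})"
    unfolding mu_def by (subst emeasure_density) auto
  finally show ?thesis .
qed

lemma fd_le_sum: "ennreal (fd z) \<le> (\<Sum>n. ennreal (exp (- ((real n)^2)) / pi) * indicator (ball 0 (real n + 1)) z)"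
proof -
  define n where "n = nat \<lfloor>cmod z\<rfloor>"
  have n1: "real n \<le> cmod z" "cmod z < real n + 1" unfolding n_def using norm_ge_zero[of z] by (auto simp: of_nat_nat)
  have "ennreal (fd z) \<le> ennreal (exp (- ((real n)^2)) / pi) * indicator (ball 0 (real n + 1)) z"
    using n1 by (auto simp: fd_def intro!: ennreal_leI divide_right_mono power_mono)
  also have "\<dots> \<le> (\<Sum>n. ennreal (exp (- ((real n)^2)) / pi) * indicator (ball 0 (real n + 1)) z)"
    using ennreal_suminf_lessD[where i=n and f="\<lambda>n. ennreal (exp (- ((real n)^2)) / pi) * indicator (ball 0 (real n + 1)) z" and x="ennreal (exp (- ((real n)^2)) / pi) * indicator (ball 0 (real n + 1)) z"] by (meson not_le order_refl)
  finally show ?thesis .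
qed

lemma term_bound: "exp (- ((real n)^2)) * (real n + 1)^2 \<le> exp 3 * (inverse (exp 1))^n"
proof -
  have a: "real n + 1 \<le> exp (real n)" using exp_ge_add_one_self[of "real n"] by (simp add: add.commute)
  have "(real n + 1)^2 \<le> (exp (real n))^2" using a by (intro power_mono) auto
  also have "\<dots> = exp (2 * real n)" by (simp add: exp_double[symmetric] power2_eq_square exp_add[symmetric])
  finally have b: "(real n + 1)^2 \<le> exp (2 * real n)" .
  have "exp (- ((real n)^2)) * (real n + 1)^2 \<le> exp (- ((real n)^2)) * exp (2 * real n)"
    using b by (intro mult_left_mono) auto
  also have "\<dots> = exp (2 * real n - (real n)^2)" by (simp add: exp_add[symmetric])
  also have "\<dots> \<le> exp (3 - real n)"
  proof -
    have "2 * real n - (real n)^2 \<le> 3 - real n"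
      using sum_squares_ge_zero[of "real n - 3/2" 0] by (simp add: power2_eq_square algebra_simps)
    then show ?thesis by simp
  qed
  also have "\<dots> = exp 3 * (inverse (exp 1))^n"
    by (simp add: exp_diff exp_of_nat_mult[symmetric] power_inverse divide_inverse)
  finally show ?thesis .
qed

lemma mu_finite: "emeasure mu UNIV < \<infinity>"
proof -
  have "emeasure mu UNIV = (\<integral>\<^sup>+(z::complex). ennreal (fd z) \<partial>lborel)"
    unfolding mu_def by (subst emeasure_density) auto
  also have "\<dots> \<le> (\<integral>\<^sup>+(z::complex). (\<Sum>n. ennreal (exp (- ((real n)^2)) / pi) * indicator (ball 0 (real n + 1)) z) \<partial>lborel)"
    by (intro nn_integral_mono fd_le_sum)
  also have "\<dots> = (\<Sum>n. (\<integral>\<^sup>+(z::complex). ennreal (exp (- ((real n)^2)) / pi) * indicator (ball 0 (real n + 1)) z \<partial>lborel))"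
    by (rule nn_integral_suminf) (auto intro!: borel_measurable_times_ennreal borel_measurable_indicator borel_open)
  also have "\<dots> = (\<Sum>n. ennreal (exp (- ((real n)^2)) * (real n + 1)^2))"
  proof (intro suminf_cong)
    fix n
    have "(\<integral>\<^sup>+(z::complex). ennreal (exp (- ((real n)^2)) / pi) * indicator (ball 0 (real n + 1)) z \<partial>lborel)
       = ennreal (exp (- ((real n)^2)) / pi) * ennreal (pi * (real n + 1)^2)"
      by (simp add: nn_integral_cmult_indicator emeasure_lborel_ball_c)
    also have "\<dots> = ennreal (exp (- ((real n)^2)) * (real n + 1)^2)"
      by (simp add: ennreal_mult'[symmetric])
    finally show "(\<integral>\<^sup>+(z::complex). ennreal (exp (- ((real n)^2)) / pi) * indicator (ball 0 (real n + 1)) z \<partial>lborel) = ennreal (exp (- ((real n)^2)) * (real n + 1)^2)" .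
  qed
  also have "\<dots> \<le> (\<Sum>n. ennreal (exp 3 * (inverse (exp 1))^n))"
    by (intro suminf_le) (auto intro!: ennreal_leI term_bound)
  also have "\<dots> = ennreal (\<Sum>n. exp 3 * (inverse (exp 1))^n)"
    by (intro suminf_ennreal2) (auto intro!: summable_mult summable_geometric simp: inverse_less_1_iff)
  also have "\<dots> < \<infinity>" by simp
  finally show ?thesis .
qed

lemma finite_mu: "finite_measure mu"
  by (rule finite_measureI) (use mu_finite in auto)

lemma psf: "product_sigma_finite (\<lambda>_. mu)"
proof -
  interpret finite_measure mu by (rule finite_mu)
  show ?thesis by (simp add: product_sigma_finite_def sigma_finite_measure_axioms)
qed

lemma fade_eq: "fade_measure M N = PiM ({1..M} \<times> {1..N}) (\<lambda>_. mu)"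
  by (simp add: fade_measure_def mu_def fd_def)

definition Z :: real where "Z = measure mu UNIV"

lemma Z_pos: "Z > 0"
proof -
  have "ennreal (1 * exp (- (1^2))) \<le> emeasure mu (ball 0 1 - {0})" using mu_ball_ge[of 1] by simp
  also have "\<dots> \<le> emeasure mu UNIV" by (intro emeasure_mono) auto
  finally have "0 < emeasure mu UNIV" by (rule order.strict_trans2[rotated]) simp
  then show ?thesis unfolding Z_def using mu_finite
    by (simp add: measure_def enn2real_positive_iff)
qed

lemma emeasure_box:
  assumes "\<And>k. k \<in> {1..M} \<times> {1..N} \<Longrightarrow> A k \<in> sets borel"
  shows "emeasure (fade_measure M N) (PiE ({1..M} \<times> {1..N}) A) = (\<Prod>k\<in>{1..M} \<times> {1..N}. emeasure mu (A k))"
proof -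
  interpret product_sigma_finite "\<lambda>_. mu" by (rule psf)
  show ?thesis unfolding fade_eq by (rule emeasure_PiM) (use assms in auto)
qed

lemma measure_box:
  assumes "\<And>k. k \<in> {1..M} \<times> {1..N} \<Longrightarrow> A k \<in> sets borel"
  shows "measure (fade_measure M N) (PiE ({1..M} \<times> {1..N}) A) = (\<Prod>k\<in>{1..M} \<times> {1..N}. measure mu (A k))"
proof -
  interpret finite_measure mu by (rule finite_mu)
  have "(\<Prod>k\<in>{1..M} \<times> {1..N}. emeasure mu (A k)) = (\<Prod>k\<in>{1..M} \<times> {1..N}. ennreal (measure mu (A k)))"
    by (intro prod.cong) (auto simp: emeasure_eq_measure)
  also have "\<dots> = ennreal (\<Prod>k\<in>{1..M} \<times> {1..N}. measure mu (A k))"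
    by (rule prod_ennreal) auto
  finally show ?thesis using emeasure_box[OF assms]
    by (simp add: measure_def prod_nonneg)
qed

lemma finite_fade: "finite_measure (fade_measure M N)"
proof (rule finite_measureI)
  have "space (fade_measure M N) = PiE ({1..M} \<times> {1..N}) (\<lambda>_. UNIV)"
    by (simp add: fade_eq space_PiM)
  then have "emeasure (fade_measure M N) (space (fade_measure M N)) = (\<Prod>k\<in>{1..M} \<times> {1..N}. emeasure mu UNIV)"
    using emeasure_box[of M N "\<lambda>_. UNIV"] by simp
  also have "\<dots> \<noteq> \<infinity>" using mu_finite by (auto simp: ennreal_prod_eq_top power_eq_top_ennreal)
  finally show "emeasure (fade_measure M N) (space (fade_measure M N)) \<noteq> \<infinity>" .
qed

lemma measure_box_D:
  assumes "D \<subseteq> {1..N}" "X \<in> sets borel"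
  shows "measure (fade_measure M N) (PiE ({1..M} \<times> {1..N}) (\<lambda>k. if snd k \<in> D then X else UNIV))
     = (measure mu X) ^ (M * card D) * Z ^ (M * (N - card D))"
proof -
  have fin: "finite D" using assms(1) finite_subset by blast
  have split: "{1..M} \<times> {1..N} = ({1..M} \<times> D) \<union> ({1..M} \<times> ({1..N} - D))" using assms(1) by auto
  have "measure (fade_measure M N) (PiE ({1..M} \<times> {1..N}) (\<lambda>k. if snd k \<in> D then X else UNIV))
      = (\<Prod>k\<in>{1..M} \<times> {1..N}. measure mu (if snd k \<in> D then X else UNIV))"
    by (rule measure_box) (use assms in auto)
  also have "\<dots> = (\<Prod>k\<in>{1..M} \<times> D. measure mu (if snd k \<in> D then X else UNIV)) *
                  (\<Prod>k\<in>{1..M} \<times> ({1..N} - D). measure mu (if snd k \<in> D then X else UNIV))"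
    by (subst split, rule prod.union_disjoint) (use fin in auto)
  also have "(\<Prod>k\<in>{1..M} \<times> D. measure mu (if snd k \<in> D then X else UNIV)) = (\<Prod>k\<in>{1..M} \<times> D. measure mu X)"
    by (intro prod.cong) auto
  also have "(\<Prod>k\<in>{1..M} \<times> ({1..N} - D). measure mu (if snd k \<in> D then X else UNIV)) = (\<Prod>k\<in>{1..M} \<times> ({1..N} - D). Z)"
    by (intro prod.cong) (auto simp: Z_def)
  finally show ?thesis
    using fin assms(1) by (simp add: card_cartesian_product card_Diff_subset)
qed

lemma space_fade: "space (fade_measure M N) = PiE ({1..M} \<times> {1..N}) (\<lambda>_. UNIV)"
  by (simp add: fade_eq space_PiM)

lemma rate_nonneg:
  assumes "W > 0" "\<sigma>0 > 0" "Pt > 0"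
  shows "rate W \<sigma>0 M Pt H j \<ge> 0"
proof -
  have "(\<Sum>i\<in>{1..M}. avg_snr W \<sigma>0 Pt * (cmod (H (i, j)))\<^sup>2) \<ge> 0"
    using assms unfolding avg_snr_def by (auto intro!: sum_nonneg)
  then show ?thesis using assms unfolding rate_def by simp
qed

lemma rate_eq: "rate W \<sigma>0 M Pt H j = W * log 2 (1 + avg_snr W \<sigma>0 Pt * (\<Sum>i\<in>{1..M}. (cmod (H (i, j)))\<^sup>2))"
  by (simp add: rate_def sum_distrib_left)

lemma measure_mu_lower:
  assumes "r \<ge> 0" shows "r^2 * exp (- (r^2)) \<le> measure mu (ball 0 r - {0})"
proof -
  interpret finite_measure mu by (rule finite_mu)
  show ?thesis using mu_ball_ge[OF assms] by (simp add: emeasure_eq_measure)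
qed

lemma measure_mu_upper:
  assumes "r \<ge> 0" shows "measure mu (ball 0 r) \<le> r^2"
proof -
  interpret finite_measure mu by (rule finite_mu)
  show ?thesis using mu_ball_le[OF assms] by (simp add: emeasure_eq_measure)
qed

lemma lower_bound:
  fixes B T W \<sigma>0 Pt :: real and M N K :: nat
  assumes "M \<ge> 1" "1 \<le> K" "K \<le> N" "B > 0" "T > 0" "W > 0" "\<sigma>0 > 0" "Pt > 0"
    and vs: "valid_scheduler N K sched" and mo: "measurable_outage B T W \<sigma>0 M N K sched"
    and small: "((2 powr (real N * B / (real K * T * W)) - 1) / real M) / avg_snr W \<sigma>0 Pt \<le> 1"
  shows "(((2 powr (real N * B / (real K * T * W)) - 1) / real M) / avg_snr W \<sigma>0 Pt * exp (-1)) ^ (M * (N - K + 1))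
          * Z ^ (M * (K - 1)) \<le> outage_prob B T W \<sigma>0 M N K sched Pt"
proof -
  define a where "a = real N * B / (real K * T * W)"
  define \<epsilon> where "\<epsilon> = (2 powr a - 1) / real M"
  define \<rho> where "\<rho> = avg_snr W \<sigma>0 Pt"
  define r where "r = sqrt (\<epsilon> / \<rho>)"
  define D0 where "D0 = {1..N - K + 1}"
  define I where "I = {1..M} \<times> {1..N}"
  define E where "E = PiE I (\<lambda>k. if snd k \<in> D0 then ball (0::complex) r - {0} else UNIV)"
  define Out where "Out = {H \<in> space (fade_measure M N). in_outage B T W \<sigma>0 M N K Pt (sched Pt H) H}"
  have \<rho>pos: "\<rho> > 0" using assms unfolding \<rho>_def avg_snr_def by simp
  have apos: "a > 0" using assms unfolding a_def by simp
  have eps_pos: "\<epsilon> > 0" using apos assms(1) unfolding \<epsilon>_def by simp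
  have r2: "r^2 = \<epsilon> / \<rho>" unfolding r_def using eps_pos \<rho>pos by simp
  have rpos: "r > 0" unfolding r_def using eps_pos \<rho>pos by simp
  have r2le: "r^2 \<le> 1" using small unfolding r2 \<epsilon>_def \<rho>_def a_def .
  have D0sub: "D0 \<subseteq> {1..N}" unfolding D0_def using assms by auto
  have cardD0: "card D0 = N - K + 1" unfolding D0_def by simp
  have Out_sets: "Out \<in> sets (fade_measure M N)" using mo assms unfolding measurable_outage_def Out_def by auto
  have E_sets: "E \<in> sets (fade_measure M N)"
    unfolding E_def I_def fade_eq by (rule sets_PiM_I_finite) auto
  have "E \<subseteq> Out"
  proof
    fix H assume HE: "H \<in> E"
    then have Hsp: "H \<in> space (fade_measure M N)" unfolding space_fade E_def I_def by (auto simp: PiE_iff)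
    define S where "S = sched Pt H"
    have Ssub: "S \<subseteq> {1..N}" and cardS: "card S = K" using vs unfolding valid_scheduler_def S_def by auto
    have "S \<inter> D0 \<noteq> {}"
    proof
      assume "S \<inter> D0 = {}"
      then have "card (S \<union> D0) = card S + card D0"
        using Ssub D0sub by (intro card_Un_disjoint) (auto intro: finite_subset)
      moreover have "card (S \<union> D0) \<le> N" using card_mono[of "{1..N}" "S \<union> D0"] Ssub D0sub by auto
      ultimately show False using cardS cardD0 assms by simp
    qed
    then obtain j where jS: "j \<in> S" and jD: "j \<in> D0" by blast
    have jN: "j \<in> {1..N}" using jD D0sub by auto
    have hb: "0 < cmod (H (i, j)) \<and> cmod (H (i, j)) < r" if "i \<in> {1..M}" for i
      using HE that jN jD unfolding E_def I_def by (force simp: PiE_iff)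
    define X where "X = (\<Sum>i\<in>{1..M}. (cmod (H (i, j)))\<^sup>2)"
    have Xpos: "X > 0" unfolding X_def using hb assms(1)
      by (intro sum_pos) auto
    have "X < (\<Sum>i\<in>{1..M}. r^2)" unfolding X_def using hb assms(1)
      by (intro sum_strict_mono) (auto intro!: power_strict_mono)
    then have Xlt: "X < real M * (\<epsilon> / \<rho>)" using r2 by simp
    have "\<rho> * X < \<rho> * (real M * (\<epsilon> / \<rho>))" using Xlt \<rho>pos by (intro mult_strict_left_mono)
    also have "\<dots> = 2 powr a - 1" using \<rho>pos assms(1) unfolding \<epsilon>_def by simp
    finally have rX: "1 + \<rho> * X < 2 powr a" by simp
    have rX1: "1 < 1 + \<rho> * X" using \<rho>pos Xpos by simp
    have lg: "log 2 (1 + \<rho> * X) < a" using rX rX1 by (simp add: log_less_iff)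
    have lg0: "log 2 (1 + \<rho> * X) > 0" using rX1 by simp
    have Rj: "rate W \<sigma>0 M Pt H j = W * log 2 (1 + \<rho> * X)" unfolding rate_eq \<rho>_def X_def ..
    have Rpos: "rate W \<sigma>0 M Pt H j > 0" using Rj lg0 assms by simp
    have Rlt: "rate W \<sigma>0 M Pt H j < real N * B / (real K * T)"
    proof -
      have "rate W \<sigma>0 M Pt H j < W * a" using Rj lg assms by simp
      also have "W * a = real N * B / (real K * T)" unfolding a_def using assms by (simp add: field_simps)
      finally show ?thesis .
    qed
    have tm: "(real N / real K * B) / rate W \<sigma>0 M Pt H j > T"
    proof -
      have "T * rate W \<sigma>0 M Pt H j < T * (real N * B / (real K * T))" using Rlt assms by (intro mult_strict_left_mono)
      also have "\<dots> = real N / real K * B" using assms by (simp add: field_simps)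
      finally show ?thesis using Rpos by (subst pos_less_divide_eq) (auto simp: mult.commute)
    qed
    have "(real N / real K * B) / rate W \<sigma>0 M Pt H j \<le> (\<Sum>j\<in>S. (real N / real K * B) / rate W \<sigma>0 M Pt H j)"
      using jS Ssub assms by (intro member_le_sum) (auto intro!: divide_nonneg_nonneg mult_nonneg_nonneg rate_nonneg intro: finite_subset)
    then have "in_outage B T W \<sigma>0 M N K Pt S H" unfolding in_outage_def using tm by linarith
    then show "H \<in> Out" unfolding Out_def S_def using Hsp by simp
  qed
  have "measure (fade_measure M N) E \<le> measure (fade_measure M N) Out"
  proof -
    interpret finite_measure "fade_measure M N" by (rule finite_fade)
    show ?thesis using \<open>E \<subseteq> Out\<close> Out_sets by (rule finite_measure_mono)
  qed
  moreover have "measure (fade_measure M N) E = (measure mu (ball 0 r - {0})) ^ (M * (N - K + 1)) * Z ^ (M * (K - 1))"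
    unfolding E_def I_def using measure_box_D[OF D0sub, of "ball 0 r - {0}" M] cardD0 assms by auto
  moreover have "(\<epsilon> / \<rho> * exp (-1)) ^ (M * (N - K + 1)) \<le> (measure mu (ball 0 r - {0})) ^ (M * (N - K + 1))"
  proof (rule power_mono)
    have "\<epsilon> / \<rho> * exp (-1) \<le> r^2 * exp (- (r^2))" unfolding r2[symmetric] using r2le by (intro mult_left_mono) auto
    also have "\<dots> \<le> measure mu (ball 0 r - {0})" using rpos by (intro measure_mu_lower) simp
    finally show "\<epsilon> / \<rho> * exp (-1) \<le> measure mu (ball 0 r - {0})" .
    show "0 \<le> \<epsilon> / \<rho> * exp (-1)" using eps_pos \<rho>pos by simp
  qed
  ultimately have "(\<epsilon> / \<rho> * exp (-1)) ^ (M * (N - K + 1)) * Z ^ (M * (K - 1)) \<le> measure (fade_measure M N) Out"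
    using Z_pos by (smt (verit) mult_right_mono zero_le_power)
  then show ?thesis unfolding outage_prob_def Out_def \<epsilon>_def a_def \<rho>_def .
qed

lemma upper_bound:
  fixes B T W \<sigma>0 Pt :: real and M N K :: nat
  assumes "M \<ge> 1" "1 \<le> K" "K \<le> N" "B > 0" "T > 0" "W > 0" "\<sigma>0 > 0" "Pt > 0"
    and tk: "topK_scheduler W \<sigma>0 M N K sched" and mo: "measurable_outage B T W \<sigma>0 M N K sched"
  shows "outage_prob B T W \<sigma>0 M N K sched Pt \<le>
     real (card {D. D \<subseteq> {1..N} \<and> card D = N - K + 1}) *
     (((2 powr (real N * B / (T * W)) - 1)) / avg_snr W \<sigma>0 Pt) ^ (M * (N - K + 1)) * Z ^ (M * (K - 1))"
proof -
  define c where "c = 2 powr (real N * B / (T * W)) - 1"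
  define \<rho> where "\<rho> = avg_snr W \<sigma>0 Pt"
  define r where "r = sqrt (c / \<rho>)"
  define Ds where "Ds = {D. D \<subseteq> {1..N} \<and> card D = N - K + 1}"
  define I where "I = {1..M} \<times> {1..N}"
  define E where "E = (\<lambda>D. PiE I (\<lambda>k. if snd k \<in> D then ball (0::complex) r else UNIV))"
  define Out where "Out = {H \<in> space (fade_measure M N). in_outage B T W \<sigma>0 M N K Pt (sched Pt H) H}"
  interpret finite_measure "fade_measure M N" by (rule finite_fade)
  have \<rho>pos: "\<rho> > 0" using assms unfolding \<rho>_def avg_snr_def by simp
  have cpos: "c \<ge> 0" unfolding c_def using assms by (simp add: ge_one_powr_ge_zero)
  have r2: "r^2 = c / \<rho>" unfolding r_def using cpos \<rho>pos by simp
  have rpos: "r \<ge> 0" unfolding r_def using cpos \<rho>pos by simp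
  have finDs: "finite Ds" unfolding Ds_def by (rule finite_subset[of _ "Pow {1..N}"]) auto
  have vs: "valid_scheduler N K sched" using tk unfolding topK_scheduler_def by simp
  have E_sets: "E D \<in> sets (fade_measure M N)" for D
    unfolding E_def I_def fade_eq by (rule sets_PiM_I_finite) auto
  have "Out \<subseteq> (\<Union>D\<in>Ds. E D)"
  proof
    fix H assume HO: "H \<in> Out"
    then have Hsp: "H \<in> space (fade_measure M N)" unfolding Out_def by simp
    define S where "S = sched Pt H"
    define R where "R = (\<lambda>j. rate W \<sigma>0 M Pt H j)"
    have Ssub: "S \<subseteq> {1..N}" and cardS: "card S = K" using vs unfolding valid_scheduler_def S_def by auto
    have finS: "finite S" using Ssub finite_subset by blast
    have top: "\<And>j j'. j \<in> S \<Longrightarrow> j' \<in> {1..N} - S \<Longrightarrow> R j' \<le> R j"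
      using tk unfolding topK_scheduler_def S_def R_def by blast
    have Rnn: "\<And>j. R j \<ge> 0" unfolding R_def using assms by (intro rate_nonneg) auto
    have sumT: "(\<Sum>j\<in>S. (real N / real K * B) / R j) > T"
      using HO unfolding Out_def in_outage_def S_def R_def by simp
    have "\<exists>j0\<in>S. (real N / real K * B) / R j0 > T / real K"
    proof (rule ccontr)
      assume "\<not> ?thesis"
      then have "\<forall>j\<in>S. (real N / real K * B) / R j \<le> T / real K" by auto
      then have "(\<Sum>j\<in>S. (real N / real K * B) / R j) \<le> (\<Sum>j\<in>S. T / real K)" by (intro sum_mono) auto
      also have "\<dots> = T" using cardS assms by simp
      finally show False using sumT by simp
    qed
    then obtain j0 where j0S: "j0 \<in> S" and j0t: "(real N / real K * B) / R j0 > T / real K" by blast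
    have R0pos: "R j0 > 0"
    proof (rule ccontr)
      assume "\<not> R j0 > 0" then have "R j0 = 0" using Rnn[of j0] by simp
      moreover have "T / real K > 0" using assms by simp
      ultimately show False using j0t by simp
    qed
    have R0lt: "R j0 < real N * B / T"
    proof -
      have "T / real K * R j0 < real N / real K * B" using j0t pos_less_divide_eq[OF R0pos] by blast
      then have "real K * (T / real K * R j0) < real K * (real N / real K * B)" using assms
        by (intro mult_strict_left_mono) auto
      then have "T * R j0 < real N * B" using assms by simp
      then show ?thesis using assms by (simp add: pos_less_divide_eq mult.commute)
    qed
    define D where "D = insert j0 ({1..N} - S)"
    have cardD: "card D = N - K + 1"
    proof -
      have "card ({1..N} - S) = N - K" using Ssub cardS card_Diff_subset[OF finS Ssub] by simp
      then show ?thesis unfolding D_def using j0S assms by simp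
    qed
    have DDs: "D \<in> Ds" unfolding Ds_def D_def using cardD D_def j0S Ssub by auto
    have Rsmall: "R j < real N * B / T" if "j \<in> D" for j
    proof (cases "j = j0")
      case True then show ?thesis using R0lt by simp
    next
      case False then have "j \<in> {1..N} - S" using that unfolding D_def by auto
      then show ?thesis using top[OF j0S] R0lt by (meson order.strict_trans1)
    qed
    have "H \<in> E D"
    proof -
      have "cmod (H (i, j)) < r" if "i \<in> {1..M}" "j \<in> D" for i j
      proof -
        define X where "X = (\<Sum>i\<in>{1..M}. (cmod (H (i, j)))\<^sup>2)"
        have Xnn: "X \<ge> 0" unfolding X_def by (auto intro!: sum_nonneg)
        have hX: "(cmod (H (i, j)))\<^sup>2 \<le> X" unfolding X_def using that
          by (intro member_le_sum) auto
        have "W * log 2 (1 + \<rho> * X) < real N * B / T"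
          using Rsmall[OF that(2)] unfolding R_def rate_eq \<rho>_def X_def .
        then have "log 2 (1 + \<rho> * X) < real N * B / (T * W)" using assms
          by (simp add: field_simps)
        then have "1 + \<rho> * X < 2 powr (real N * B / (T * W))"
          using \<rho>pos Xnn by (subst (asm) log_less_iff) (auto intro: add_pos_nonneg)
        then have "\<rho> * X < c" unfolding c_def by simp
        then have "X < c / \<rho>" using \<rho>pos by (simp add: pos_less_divide_eq mult.commute)
        then have "(cmod (H (i, j)))\<^sup>2 < r^2" using hX r2 by simp
        then show ?thesis using rpos by (simp add: power_less_imp_less_base)
      qed
      then show ?thesis using Hsp unfolding E_def I_def space_fade by (auto simp: PiE_iff)
    qed
    then show "H \<in> (\<Union>D\<in>Ds. E D)" using DDs by blast
  qed
  then have "measure (fade_measure M N) Out \<le> measure (fade_measure M N) (\<Union>D\<in>Ds. E D)"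
    using E_sets finDs by (intro finite_measure_mono) auto
  also have "\<dots> \<le> (\<Sum>D\<in>Ds. measure (fade_measure M N) (E D))"
    using E_sets finDs by (intro finite_measure_subadditive_finite) auto
  also have "\<dots> \<le> (\<Sum>D\<in>Ds. (c / \<rho>) ^ (M * (N - K + 1)) * Z ^ (M * (K - 1)))"
  proof (intro sum_mono)
    fix D assume "D \<in> Ds"
    then have Dsub: "D \<subseteq> {1..N}" and cD: "card D = N - K + 1" unfolding Ds_def by auto
    have "measure (fade_measure M N) (E D) = (measure mu (ball 0 r)) ^ (M * (N - K + 1)) * Z ^ (M * (K - 1))"
      unfolding E_def I_def using measure_box_D[OF Dsub, of "ball 0 r" M] cD assms by auto
    also have "\<dots> \<le> (c / \<rho>) ^ (M * (N - K + 1)) * Z ^ (M * (K - 1))"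
      using Z_pos measure_mu_upper[OF rpos] r2
      by (intro mult_right_mono power_mono) auto
    finally show "measure (fade_measure M N) (E D) \<le> (c / \<rho>) ^ (M * (N - K + 1)) * Z ^ (M * (K - 1))" .
  qed
  also have "\<dots> = real (card Ds) * (c / \<rho>) ^ (M * (N - K + 1)) * Z ^ (M * (K - 1))" by simp
  finally show ?thesis unfolding outage_prob_def Out_def[symmetric] c_def[symmetric] \<rho>_def[symmetric] Ds_def[symmetric] .
qed

lemma lim_aux1: "((\<lambda>x::real. (d * ln x - c) / ln x) \<longlongrightarrow> d) at_top"
  by real_asymp

lemma div_limit:
  fixes f :: "real \<Rightarrow> real" and A C :: real and n :: nat
  assumes "A > 0" "C > 0"
    and ev: "eventually (\<lambda>x. A * (1/x)^n \<le> f x \<and> f x \<le> C * (1/x)^n) at_top"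
  shows "((\<lambda>x. - (ln (f x) / ln x)) \<longlongrightarrow> real n) at_top"
proof (rule tendsto_sandwich[OF _ _ lim_aux1[of "real n" "ln C"] lim_aux1[of "real n" "ln A"]])
  have ev2: "eventually (\<lambda>x. x > 1 \<and> A * (1/x)^n \<le> f x \<and> f x \<le> C * (1/x)^n) at_top"
    using ev eventually_gt_at_top[of 1] by eventually_elim auto
  show "eventually (\<lambda>x. (real n * ln x - ln C) / ln x \<le> - (ln (f x) / ln x)) at_top"
    using ev2
  proof eventually_elim
    case (elim x)
    then have x1: "x > 1" and lo: "A * (1/x)^n \<le> f x" and up: "f x \<le> C * (1/x)^n" by auto
    have pos: "A * (1/x)^n > 0" using x1 assms by simp
    have "ln (f x) \<le> ln (C * (1/x)^n)" using pos lo up by (subst ln_le_cancel_iff) auto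
    also have "\<dots> = ln C - real n * ln x" using x1 assms by (simp add: ln_mult ln_realpow ln_div)
    finally have "ln (f x) \<le> ln C - real n * ln x" .
    moreover have "ln x > 0" using x1 by simp
    ultimately have "(real n * ln x - ln C) / ln x \<le> (- ln (f x)) / ln x"
      by (intro divide_right_mono) auto
    then show ?case by simp
  qed
  show "eventually (\<lambda>x. - (ln (f x) / ln x) \<le> (real n * ln x - ln A) / ln x) at_top"
    using ev2
  proof eventually_elim
    case (elim x)
    then have x1: "x > 1" and lo: "A * (1/x)^n \<le> f x" by auto
    have pos: "A * (1/x)^n > 0" using x1 assms by simp
    have "ln (A * (1/x)^n) \<le> ln (f x)" using pos lo by (subst ln_le_cancel_iff) auto
    moreover have "ln (A * (1/x)^n) = ln A - real n * ln x" using x1 assms by (simp add: ln_mult ln_realpow ln_div)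
    ultimately have "ln A - real n * ln x \<le> ln (f x)" by simp
    moreover have "ln x > 0" using x1 by simp
    ultimately show ?case by (simp add: field_simps)
  qed
qed

lemma div_upper:
  fixes f :: "real \<Rightarrow> real" and A d :: real and n :: nat
  assumes "A > 0"
    and ev: "eventually (\<lambda>x. A * (1/x)^n \<le> f x) at_top"
    and lim: "((\<lambda>x. - (ln (f x) / ln x)) \<longlongrightarrow> d) at_top"
  shows "d \<le> real n"
proof (rule tendsto_le[OF _ lim_aux1[of "real n" "ln A"] lim])
  show "eventually (\<lambda>x. - (ln (f x) / ln x) \<le> (real n * ln x - ln A) / ln x) at_top"
    using ev eventually_gt_at_top[of 1]
  proof eventually_elim
    case (elim x)
    then have x1: "x > 1" and lo: "A * (1/x)^n \<le> f x" by auto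
    have pos: "A * (1/x)^n > 0" using x1 assms by simp
    have "ln (A * (1/x)^n) \<le> ln (f x)" using pos lo by (subst ln_le_cancel_iff) auto
    moreover have "ln (A * (1/x)^n) = ln A - real n * ln x" using x1 assms by (simp add: ln_mult ln_realpow ln_div)
    ultimately have "ln A - real n * ln x \<le> ln (f x)" by simp
    moreover have "ln x > 0" using x1 by simp
    ultimately show ?case by (simp add: field_simps)
  qed
qed simp

definition prec :: "(nat \<Rightarrow> real) \<Rightarrow> nat \<Rightarrow> nat \<Rightarrow> bool" where
  "prec R a b \<longleftrightarrow> R a > R b \<or> (R a = R b \<and> a < b)"

definition rk :: "nat \<Rightarrow> (nat \<Rightarrow> real) \<Rightarrow> nat \<Rightarrow> nat" where
  "rk N R b = card {a \<in> {1..N}. prec R a b}"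

definition selK :: "nat \<Rightarrow> nat \<Rightarrow> (nat \<Rightarrow> real) \<Rightarrow> nat set" where
  "selK N K R = {b \<in> {1..N}. rk N R b < K}"

lemma prec_trans: "prec R a b \<Longrightarrow> prec R b c \<Longrightarrow> prec R a c"
  unfolding prec_def by auto

lemma prec_irrefl: "\<not> prec R a a" unfolding prec_def by auto

lemma prec_total: "a \<noteq> b \<Longrightarrow> prec R a b \<or> prec R b a" unfolding prec_def by auto

lemma rk_less: assumes "prec R a b" "a \<in> {1..N}" shows "rk N R a < rk N R b"
proof -
  have "{x \<in> {1..N}. prec R x a} \<subset> {x \<in> {1..N}. prec R x b}"
    using assms prec_trans[of R _ a b] prec_irrefl[of R a] by auto
  then show ?thesis unfolding rk_def by (intro psubset_card_mono) auto
qed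

lemma rk_bound: assumes "b \<in> {1..N}" shows "rk N R b < N"
proof -
  have "{x \<in> {1..N}. prec R x b} \<subseteq> {1..N} - {b}" using prec_irrefl[of R b] by auto
  then have "rk N R b \<le> card ({1..N} - {b})" unfolding rk_def by (intro card_mono) auto
  also have "\<dots> = N - 1" using assms by simp
  finally have "rk N R b \<le> N - 1" .
  then show ?thesis using assms by (cases N) auto
qed

lemma rk_inj: "inj_on (rk N R) {1..N}"
proof (rule inj_onI)
  fix a b assume ab: "a \<in> {1..N}" "b \<in> {1..N}" "rk N R a = rk N R b"
  show "a = b"
  proof (rule ccontr)
    assume "a \<noteq> b"
    then have "prec R a b \<or> prec R b a" by (rule prec_total)
    then show False using rk_less[of R a b N] rk_less[of R b a N] ab by auto
  qed
qed

lemma rk_image: "rk N R ` {1..N} = {0..<N}"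
proof -
  have sub: "rk N R ` {1..N} \<subseteq> {0..<N}" using rk_bound by auto
  have "card (rk N R ` {1..N}) = N" using card_image[OF rk_inj] by simp
  then show ?thesis using sub by (intro card_subset_eq) auto
qed

lemma selK_card: assumes "K \<le> N" shows "card (selK N K R) = K"
proof -
  have "rk N R ` selK N K R = {x \<in> rk N R ` {1..N}. x < K}" unfolding selK_def by auto
  also have "\<dots> = {0..<K}" using assms rk_image[of N R] by auto
  finally have "card (rk N R ` selK N K R) = K" by simp
  moreover have "inj_on (rk N R) (selK N K R)"
    by (rule inj_on_subset[OF rk_inj]) (auto simp: selK_def)
  ultimately show ?thesis by (simp add: card_image)
qed

lemma selK_top: assumes "j \<in> selK N K R" "j' \<in> {1..N} - selK N K R" shows "R j' \<le> R j"
proof (rule ccontr)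
  assume "\<not> R j' \<le> R j"
  then have "prec R j' j" unfolding prec_def by auto
  then have "rk N R j' < rk N R j" using assms by (intro rk_less) auto
  then show False using assms unfolding selK_def by auto
qed

lemma rk_sum: "real (rk N R b) = (\<Sum>a\<in>{1..N}. if prec R a b then 1 else 0)"
  unfolding rk_def using sum.inter_filter[of "{1..N}" "\<lambda>_. 1::real" "\<lambda>a. prec R a b"] by simp

lemma comp_meas: "(\<lambda>H. H k) \<in> borel_measurable (fade_measure M N)"
proof (cases "k \<in> {1..M} \<times> {1..N}")
  case True
  have "(\<lambda>H. H k) \<in> measurable (fade_measure M N) mu"
    unfolding fade_eq by (rule measurable_component_singleton[OF True])
  moreover have "measurable (fade_measure M N) mu = measurable (fade_measure M N) borel"
    by (rule measurable_cong_sets) auto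
  ultimately show ?thesis by simp
next
  case False
  have eq: "H k = undefined" if "H \<in> space (fade_measure M N)" for H
    using that False unfolding space_fade by (cases k) (auto simp: PiE_def extensional_def)
  show ?thesis
    by (subst measurable_cong[where g="\<lambda>_. undefined"]) (auto simp: eq)
qed

lemma cm2: "(\<lambda>H. (cmod (H (i, j)))\<^sup>2) \<in> borel_measurable (fade_measure M N)"
  by (rule borel_measurable_power, rule measurable_compose[OF comp_meas borel_measurable_norm])

lemma rate_meas: "(\<lambda>H. rate W \<sigma>0 M Pt H j) \<in> borel_measurable (fade_measure M N)"
proof -
  have "(\<lambda>H. (\<Sum>i\<in>{1..M}. avg_snr W \<sigma>0 Pt * (cmod (H (i, j)))\<^sup>2)) \<in> borel_measurable (fade_measure M N)"
    by (rule borel_measurable_sum, rule borel_measurable_times[OF borel_measurable_const cm2])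
  then show ?thesis unfolding rate_def
    by (rule borel_measurable_times[OF borel_measurable_const borel_measurable_log[OF borel_measurable_add[OF borel_measurable_const] borel_measurable_const]])
qed

lemma rk_less_iff: "rk N R b < K \<longleftrightarrow> (\<Sum>a\<in>{1..N}. if prec R a b then 1 else 0) < real K"
  by (subst rk_sum[symmetric]) simp

definition sch :: "real \<Rightarrow> real \<Rightarrow> nat \<Rightarrow> nat \<Rightarrow> nat \<Rightarrow> scheduler" where
  "sch W \<sigma>0 M N K Pt H = selK N K (\<lambda>j. rate W \<sigma>0 M Pt H j)"

lemma sch_topK: "K \<le> N \<Longrightarrow> topK_scheduler W \<sigma>0 M N K (sch W \<sigma>0 M N K)"
  unfolding topK_scheduler_def valid_scheduler_def sch_def
proof (intro conjI allI ballI)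
  fix Pt H
  show "selK N K (rate W \<sigma>0 M Pt H) \<subseteq> {1..N}" by (auto simp: selK_def)
  assume "K \<le> N"
  then show "card (selK N K (rate W \<sigma>0 M Pt H)) = K" by (rule selK_card)
next
  fix Pt H j j'
  assume "j \<in> selK N K (rate W \<sigma>0 M Pt H)" "j' \<in> {1..N} - selK N K (rate W \<sigma>0 M Pt H)"
  then show "rate W \<sigma>0 M Pt H j' \<le> rate W \<sigma>0 M Pt H j" by (rule selK_top)
qed

lemma sch_meas: "measurable_outage B T W \<sigma>0 M N K (sch W \<sigma>0 M N K)"
  unfolding measurable_outage_def
proof (intro allI impI)
  fix Pt :: real
  define R where "R = (\<lambda>H j. rate W \<sigma>0 M Pt H j)"
  have Rm[measurable]: "(\<lambda>H. R H j) \<in> borel_measurable (fade_measure M N)" for j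
    unfolding R_def by (rule rate_meas)
  have [measurable]: "Measurable.pred (fade_measure M N) (\<lambda>x. R x a = R x b)" for a b
    unfolding pred_def by (rule borel_measurable_eq) (rule Rm)+
  have [measurable]: "(\<lambda>w. real K) \<in> borel_measurable (fade_measure M N)"
    by (rule borel_measurable_const)
  have eq: "in_outage B T W \<sigma>0 M N K Pt (sch W \<sigma>0 M N K Pt H) H \<longleftrightarrow>
     T < (\<Sum>b\<in>{1..N}. if (\<Sum>a\<in>{1..N}. if R H a > R H b \<or> (R H a = R H b \<and> a < b) then 1 else 0) < real K
          then (real N / real K * B) / R H b else 0)" for H
  proof -
    have "(\<Sum>j\<in>sch W \<sigma>0 M N K Pt H. (real N / real K * B) / rate W \<sigma>0 M Pt H j)
       = (\<Sum>b\<in>{1..N}. if rk N (R H) b < K then (real N / real K * B) / R H b else 0)"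
      unfolding sch_def selK_def R_def by (rule sum.inter_filter) simp
    also have "\<dots> = (\<Sum>b\<in>{1..N}. if (\<Sum>a\<in>{1..N}. if R H a > R H b \<or> (R H a = R H b \<and> a < b) then 1 else 0) < real K
          then (real N / real K * B) / R H b else 0)"
      by (intro sum.cong refl) (simp only: rk_less_iff prec_def)
    finally show ?thesis unfolding in_outage_def by simp
  qed
  show "{H \<in> space (fade_measure M N). in_outage B T W \<sigma>0 M N K Pt (sch W \<sigma>0 M N K Pt H) H} \<in> sets (fade_measure M N)"
    unfolding eq by measurable
qed

lemma lower_ev:
  fixes B T W \<sigma>0 :: real and M N K :: nat
  assumes "M \<ge> 1" "1 \<le> K" "K \<le> N" "B > 0" "T > 0" "W > 0" "\<sigma>0 > 0"
    and vs: "valid_scheduler N K sched" and mo: "measurable_outage B T W \<sigma>0 M N K sched"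
  shows "\<exists>A>0. eventually (\<lambda>x. A * (1/x) ^ (M * (N - K + 1)) \<le> outage_prob B T W \<sigma>0 M N K sched x) at_top"
proof -
  define \<epsilon> where "\<epsilon> = (2 powr (real N * B / (real K * T * W)) - 1) / real M"
  define n where "n = M * (N - K + 1)"
  define A where "A = (\<epsilon> * (W * \<sigma>0) * exp (-1)) ^ n * Z ^ (M * (K - 1))"
  have eps_pos: "\<epsilon> > 0" using assms unfolding \<epsilon>_def by simp
  have "A > 0" unfolding A_def using eps_pos assms Z_pos by simp
  moreover have "eventually (\<lambda>x. A * (1/x) ^ n \<le> outage_prob B T W \<sigma>0 M N K sched x) at_top"
    using eventually_ge_at_top[of "\<epsilon> * (W * \<sigma>0)"] eventually_gt_at_top[of 0]
  proof eventually_elim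
    case (elim x)
    have small: "\<epsilon> / avg_snr W \<sigma>0 x \<le> 1" using elim assms eps_pos
      by (simp add: avg_snr_def field_simps)
    have "A * (1/x) ^ n = (\<epsilon> / avg_snr W \<sigma>0 x * exp (-1)) ^ n * Z ^ (M * (K - 1))"
    proof -
      have "\<epsilon> / avg_snr W \<sigma>0 x * exp (-1) = (\<epsilon> * (W * \<sigma>0) * exp (-1)) * (1/x)"
        using elim assms by (simp add: avg_snr_def field_simps)
      then have "(\<epsilon> / avg_snr W \<sigma>0 x * exp (-1)) ^ n = (\<epsilon> * (W * \<sigma>0) * exp (-1)) ^ n * (1/x) ^ n"
        by (simp only: power_mult_distrib)
      then show ?thesis unfolding A_def by (simp only: ac_simps)
    qed
    also have "\<dots> \<le> outage_prob B T W \<sigma>0 M N K sched x"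
      using lower_bound[OF assms(1-7) elim(2) vs mo] small unfolding \<epsilon>_def n_def by simp
    finally show ?case .
  qed
  ultimately show ?thesis unfolding n_def by blast
qed

lemma upper_ev:
  fixes B T W \<sigma>0 :: real and M N K :: nat
  assumes "M \<ge> 1" "1 \<le> K" "K \<le> N" "B > 0" "T > 0" "W > 0" "\<sigma>0 > 0"
    and tk: "topK_scheduler W \<sigma>0 M N K sched" and mo: "measurable_outage B T W \<sigma>0 M N K sched"
  shows "\<exists>C>0. eventually (\<lambda>x. outage_prob B T W \<sigma>0 M N K sched x \<le> C * (1/x) ^ (M * (N - K + 1))) at_top"
proof -
  define c where "c = 2 powr (real N * B / (T * W)) - 1"
  define n where "n = M * (N - K + 1)"
  define cD where "cD = real (card {D. D \<subseteq> {1..N} \<and> card D = N - K + 1})"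
  define C0 where "C0 = cD * (c * (W * \<sigma>0)) ^ n * Z ^ (M * (K - 1))"
  have "max C0 1 > 0" by simp
  moreover have "eventually (\<lambda>x. outage_prob B T W \<sigma>0 M N K sched x \<le> max C0 1 * (1/x) ^ n) at_top"
    using eventually_gt_at_top[of 0]
  proof eventually_elim
    case (elim x)
    have "outage_prob B T W \<sigma>0 M N K sched x \<le> cD * (c / avg_snr W \<sigma>0 x) ^ n * Z ^ (M * (K - 1))"
      using upper_bound[OF assms(1-7) elim tk mo] unfolding c_def n_def cD_def by simp
    also have "\<dots> = C0 * (1/x) ^ n"
    proof -
      have "c / avg_snr W \<sigma>0 x = (c * (W * \<sigma>0)) * (1/x)"
        using elim assms by (simp add: avg_snr_def field_simps)
      then have "(c / avg_snr W \<sigma>0 x) ^ n = (c * (W * \<sigma>0)) ^ n * (1/x) ^ n"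
        by (simp only: power_mult_distrib)
      then show ?thesis unfolding C0_def by (simp only: ac_simps)
    qed
    also have "\<dots> \<le> max C0 1 * (1/x) ^ n" using elim by (intro mult_right_mono) auto
    finally show ?case .
  qed
  ultimately show ?thesis unfolding n_def by blast
qed

theorem proposition1:
  fixes B T W \<sigma>0 :: real and M N K :: nat
  assumes "M \<ge> 1" and "N \<ge> 1" and "1 \<le> K" and "K \<le> N"
    and "B > 0" and "T > 0" and "W > 0" and "\<sigma>0 > 0"
  shows "(\<exists>sched. topK_scheduler W \<sigma>0 M N K sched \<and> measurable_outage B T W \<sigma>0 M N K sched)
    \<and> (\<forall>sched. topK_scheduler W \<sigma>0 M N K sched \<and> measurable_outage B T W \<sigma>0 M N K sched \<longrightarrow>
          has_diversity_order B T W \<sigma>0 M N K sched (real (M * (N - K + 1))))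
    \<and> (\<forall>sched d. valid_scheduler N K sched \<and> measurable_outage B T W \<sigma>0 M N K sched
          \<and> has_diversity_order B T W \<sigma>0 M N K sched d \<longrightarrow> d \<le> real (M * (N - K + 1)))"
proof (intro conjI allI impI)
  show "\<exists>sched. topK_scheduler W \<sigma>0 M N K sched \<and> measurable_outage B T W \<sigma>0 M N K sched"
    using sch_topK[OF assms(4)] sch_meas by blast
next
  fix sched
  assume h: "topK_scheduler W \<sigma>0 M N K sched \<and> measurable_outage B T W \<sigma>0 M N K sched"
  then have vs: "valid_scheduler N K sched" unfolding topK_scheduler_def by simp
  obtain A where A: "A > 0" "eventually (\<lambda>x. A * (1/x) ^ (M * (N - K + 1)) \<le> outage_prob B T W \<sigma>0 M N K sched x) at_top"
    using lower_ev[OF assms(1,3,4,5,6,7,8) vs] h by blast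
  obtain C where C: "C > 0" "eventually (\<lambda>x. outage_prob B T W \<sigma>0 M N K sched x \<le> C * (1/x) ^ (M * (N - K + 1))) at_top"
    using upper_ev[OF assms(1,3,4,5,6,7,8)] h by blast
  show "has_diversity_order B T W \<sigma>0 M N K sched (real (M * (N - K + 1)))"
    unfolding has_diversity_order_def
    by (rule div_limit[OF A(1) C(1)]) (use A(2) C(2) in \<open>eventually_elim, simp\<close>)
next
  fix sched d
  assume h: "valid_scheduler N K sched \<and> measurable_outage B T W \<sigma>0 M N K sched
          \<and> has_diversity_order B T W \<sigma>0 M N K sched d"
  obtain A where A: "A > 0" "eventually (\<lambda>x. A * (1/x) ^ (M * (N - K + 1)) \<le> outage_prob B T W \<sigma>0 M N K sched x) at_top"
    using lower_ev[OF assms(1,3,4,5,6,7,8)] h by blast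
  show "d \<le> real (M * (N - K + 1))"
    by (rule div_upper[OF A(1) A(2)]) (use h in \<open>simp add: has_diversity_order_def\<close>)
qed

end
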